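(* Consider feature importance schemes, i.e. rules $I$ that assign to every finite feature set $F$ and every evaluation function $\nu$ on $F$ a function $I_\nu : F \to \mathbb{R}_{\ge 0}$. Consider the following three properties of a scheme $I$: 1. (Marginal contribution) For every $F$, every evaluation function $\nu$ on $F$ and every $f\in F$: $I_\nu(f) \ge \nu(F) - \nu(F\setminus\{f\})$. 2. (Elimination) For every $F$, every evaluation function $\nu$ on $F$, every $T\subseteq F$, and every $f \in F\setminus T$: $I_\nu(f) \ge I_{\nu'}(f)$, where $(F',\nu')$ is the result of eliminating $T$ from $(F,\nu)$. 3. (Minimalism) For every scheme $J$ satisfying properties 1 and 2, and for every $F$, every evaluation function $\nu$ on $F$ and every $f\in F$: $I_\nu(f) \le J_\nu(f)$. Then the scheme $$I_\nu(f) = \max_{S \subseteq F} \Delta(f,S,\nu)$$ satisfies properties 1, 2 and 3, and it is the only scheme satisfying all three properties.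
   Context: A feature set $F$ is a finite set. An evaluation function on $F$ is a function $\nu : 2^F \to \mathbb{R}_{\ge 0}$ assigning a value to each subset of $F$, with $\nu(\emptyset)=0$. For $f\in F$ and $S\subseteq F$, the marginal gain is $\Delta(f,S,\nu) = \nu(S\cup\{f\}) - \nu(S)$. Eliminating a set $T\subseteq F$ from $(F,\nu)$ produces the feature set $F' = F\setminus T$ and the evaluation function $\nu'$ on $F'$ defined by $\nu'(S) = \nu(S)$ for all $S\subseteq F'$. The function $I_\nu(f)=\max_{S\subseteq F}\Delta(f,S,\nu)$ is called the Marginal Contribution Feature Importance (MCI). *)

theory Defs
  imports Complex_Main
begin

text \<open>An evaluation function on a finite feature set F is represented canonically by a
  function on all sets of features that is 0 outside Pow F (so evaluation functions on F
  correspond bijectively to their HOL representatives).\<close>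

definition eval_fun :: "'a set \<Rightarrow> ('a set \<Rightarrow> real) \<Rightarrow> bool" where
  "eval_fun F \<nu> \<longleftrightarrow> \<nu> {} = 0 \<and> (\<forall>S. S \<subseteq> F \<longrightarrow> \<nu> S \<ge> 0) \<and> (\<forall>S. \<not> S \<subseteq> F \<longrightarrow> \<nu> S = 0)"

type_synonym 'a scheme = "'a set \<Rightarrow> ('a set \<Rightarrow> real) \<Rightarrow> 'a \<Rightarrow> real"

definition marginal_gain :: "'a \<Rightarrow> 'a set \<Rightarrow> ('a set \<Rightarrow> real) \<Rightarrow> real" where
  "marginal_gain f S \<nu> = \<nu> (S \<union> {f}) - \<nu> S"

definition elim_set :: "'a set \<Rightarrow> 'a set \<Rightarrow> 'a set" where
  "elim_set F T = F - T"

definition elim_fun :: "'a set \<Rightarrow> ('a set \<Rightarrow> real) \<Rightarrow> 'a set \<Rightarrow> ('a set \<Rightarrow> real)" where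
  "elim_fun F \<nu> T = (\<lambda>S. if S \<subseteq> F - T then \<nu> S else 0)"

definition is_scheme :: "'a scheme \<Rightarrow> bool" where
  "is_scheme I \<longleftrightarrow> (\<forall>F \<nu>. finite F \<and> eval_fun F \<nu> \<longrightarrow> (\<forall>f\<in>F. I F \<nu> f \<ge> 0))"

definition marginal_contribution_prop :: "'a scheme \<Rightarrow> bool" where
  "marginal_contribution_prop I \<longleftrightarrow>
     (\<forall>F \<nu>. finite F \<and> eval_fun F \<nu> \<longrightarrow> (\<forall>f\<in>F. I F \<nu> f \<ge> \<nu> F - \<nu> (F - {f})))"

definition elimination_prop :: "'a scheme \<Rightarrow> bool" where
  "elimination_prop I \<longleftrightarrow>
     (\<forall>F \<nu> T. finite F \<and> eval_fun F \<nu> \<and> T \<subseteq> F \<longrightarrow>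
        (\<forall>f \<in> F - T. I F \<nu> f \<ge> I (elim_set F T) (elim_fun F \<nu> T) f))"

definition minimalism_prop :: "'a scheme \<Rightarrow> bool" where
  "minimalism_prop I \<longleftrightarrow>
     (\<forall>J. is_scheme J \<and> marginal_contribution_prop J \<and> elimination_prop J \<longrightarrow>
        (\<forall>F \<nu>. finite F \<and> eval_fun F \<nu> \<longrightarrow> (\<forall>f\<in>F. I F \<nu> f \<le> J F \<nu> f)))"

definition mci :: "'a scheme" where
  "mci F \<nu> f = Max ((\<lambda>S. marginal_gain f S \<nu>) ` Pow F)"

end

theory Submission
  imports Defs
begin

lemma mci_ge: "finite F \<Longrightarrow> S \<subseteq> F \<Longrightarrow> marginal_gain f S \<nu> \<le> mci F \<nu> f"
  unfolding mci_def by (rule Max_ge) auto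

lemma mci_attain: "finite F \<Longrightarrow> \<exists>S\<subseteq>F. mci F \<nu> f = marginal_gain f S \<nu>"
proof -
  assume "finite F"
  then have "mci F \<nu> f \<in> (\<lambda>S. marginal_gain f S \<nu>) ` Pow F"
    unfolding mci_def by (intro Max_in) auto
  then show ?thesis by auto
qed

lemma eval_elim: "eval_fun F \<nu> \<Longrightarrow> eval_fun (elim_set F T) (elim_fun F \<nu> T)"
  unfolding eval_fun_def elim_set_def elim_fun_def by auto

lemma mci_scheme: "is_scheme mci"
  unfolding is_scheme_def
proof (intro allI impI ballI)
  fix F \<nu> f assume "finite F \<and> eval_fun F \<nu>" "f \<in> F"
  then have "marginal_gain f F \<nu> \<le> mci F \<nu> f" by (intro mci_ge) auto
  moreover have "marginal_gain f F \<nu> = 0" using \<open>f\<in>F\<close>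
    unfolding marginal_gain_def by (simp add: insert_absorb)
  ultimately show "0 \<le> mci F \<nu> f" by simp
qed

lemma mci_mc: "marginal_contribution_prop mci"
  unfolding marginal_contribution_prop_def
proof (intro allI impI ballI)
  fix F \<nu> f assume "finite F \<and> eval_fun F \<nu>" "f \<in> F"
  then have "marginal_gain f (F - {f}) \<nu> \<le> mci F \<nu> f" by (intro mci_ge) auto
  moreover have "F - {f} \<union> {f} = F" using \<open>f\<in>F\<close> by auto
  ultimately show "\<nu> F - \<nu> (F - {f}) \<le> mci F \<nu> f" unfolding marginal_gain_def by simp
qed

lemma mci_elim: "elimination_prop mci"
  unfolding elimination_prop_def
proof (intro allI impI ballI)
  fix F \<nu> T f assume A: "finite F \<and> eval_fun F \<nu> \<and> T \<subseteq> F" and f: "f \<in> F - T"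
  have fin: "finite (elim_set F T)" using A unfolding elim_set_def by auto
  obtain S where S: "S \<subseteq> elim_set F T"
    "mci (elim_set F T) (elim_fun F \<nu> T) f = marginal_gain f S (elim_fun F \<nu> T)"
    using mci_attain[OF fin, of "elim_fun F \<nu> T" f] by blast
  have "marginal_gain f S (elim_fun F \<nu> T) = marginal_gain f S \<nu>"
    using S(1) f unfolding marginal_gain_def elim_fun_def elim_set_def by auto
  moreover have "marginal_gain f S \<nu> \<le> mci F \<nu> f"
    using A S(1) by (intro mci_ge) (auto simp: elim_set_def)
  ultimately show "mci (elim_set F T) (elim_fun F \<nu> T) f \<le> mci F \<nu> f" using S by simp
qed

lemma mci_min: "minimalism_prop mci"
  unfolding minimalism_prop_def
proof (intro allI impI ballI)
  fix J :: "'a scheme" and F :: "'a set" and \<nu> f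
  assume J: "is_scheme J \<and> marginal_contribution_prop J \<and> elimination_prop J"
    and A: "finite F \<and> eval_fun F \<nu>" and f: "f \<in> F"
  obtain S where S: "S \<subseteq> F" "mci F \<nu> f = marginal_gain f S \<nu>"
    using mci_attain[of F \<nu> f] A by blast
  show "mci F \<nu> f \<le> J F \<nu> f"
  proof (cases "f \<in> S")
    case True
    then have "marginal_gain f S \<nu> = 0" unfolding marginal_gain_def by (simp add: insert_absorb)
    moreover have "J F \<nu> f \<ge> 0" using J A f unfolding is_scheme_def by auto
    ultimately show ?thesis using S by simp
  next
    case False
    define T where "T = F - (S \<union> {f})"
    have T: "T \<subseteq> F" "f \<in> F - T" using f unfolding T_def by auto
    have ES: "elim_set F T = S \<union> {f}" using S f unfolding T_def elim_set_def by auto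
    have ev: "eval_fun (elim_set F T) (elim_fun F \<nu> T)" using A eval_elim by blast
    have "J F \<nu> f \<ge> J (elim_set F T) (elim_fun F \<nu> T) f"
      using J A T unfolding elimination_prop_def by auto
    moreover have "J (elim_set F T) (elim_fun F \<nu> T) f \<ge>
        elim_fun F \<nu> T (elim_set F T) - elim_fun F \<nu> T (elim_set F T - {f})"
    proof -
      have "finite (elim_set F T)" using ES A S(1) finite_subset by auto
      moreover have "f \<in> elim_set F T" using ES by auto
      ultimately show ?thesis using J ev unfolding marginal_contribution_prop_def by blast
    qed
    moreover have "elim_fun F \<nu> T (elim_set F T) - elim_fun F \<nu> T (elim_set F T - {f})
        = marginal_gain f S \<nu>"
      using ES False unfolding elim_fun_def elim_set_def marginal_gain_def by auto
    ultimately show ?thesis using S by simp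
  qed
qed

theorem theorem1:
  shows "is_scheme (mci :: 'a scheme) \<and> marginal_contribution_prop (mci :: 'a scheme)
    \<and> elimination_prop (mci :: 'a scheme) \<and> minimalism_prop (mci :: 'a scheme)
    \<and> (\<forall>I :: 'a scheme. is_scheme I \<and> marginal_contribution_prop I \<and> elimination_prop I
          \<and> minimalism_prop I \<longrightarrow>
          (\<forall>F \<nu>. finite F \<and> eval_fun F \<nu> \<longrightarrow> (\<forall>f\<in>F. I F \<nu> f = mci F \<nu> f)))"
proof (intro conjI allI impI ballI)
  fix I :: "'a scheme" and F :: "'a set" and \<nu> f
  assume I: "is_scheme I \<and> marginal_contribution_prop I \<and> elimination_prop I \<and> minimalism_prop I"
    and A: "finite F \<and> eval_fun F \<nu>" and f: "f \<in> F"
  have "I F \<nu> f \<le> mci F \<nu> f"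
    using I A f mci_scheme mci_mc mci_elim unfolding minimalism_prop_def
    by (elim conjE allE[of _ mci] impE allE[of _ F] allE[of _ \<nu>] ballE[of _ _ f]) auto
  moreover have "mci F \<nu> f \<le> I F \<nu> f"
    using I A f mci_min unfolding minimalism_prop_def
    by (elim conjE allE[of _ I] impE allE[of _ F] allE[of _ \<nu>] ballE[of _ _ f]) auto
  ultimately show "I F \<nu> f = mci F \<nu> f" by simp
qed (rule mci_scheme mci_mc mci_elim mci_min)+

end
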